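(* Let $\mathcal{G}$ be a cyclic group of prime order with generator $g$, and let $m$ be a positive integer. Let $\mathcal{A}_{m\text{-}\mathsf{MDL}}$ be a (possibly randomized) $m$-MDL algorithm in the GGM having at most $T$ group operation gates. Then \[\Pr_{\mathcal{A}_{m\text{-}\mathsf{MDL}},\mathbf{x}}\left[\mathcal{A}_{m\text{-}\mathsf{MDL}}^{\mathcal{G}}(g,g^{\mathbf{x}})\rightarrow\mathbf{x}\right]=O\!\left(\left(\frac{e(T+2m+1)^2}{2m|\mathcal{G}|}\right)^m\right),\] where $\mathbf{x}=(x_1,\dots,x_m)$ is uniformly random in $\{0,\dots,|\mathcal{G}|-1\}^m$ and $g^{\mathbf{x}}=(g^{x_1},\dots,g^{x_m})$.
   Context: Generic group model (Maurer-style). Let $\mathcal{G}$ be a cyclic group of known prime order $N$ with generator $g$. A GGM algorithm is a circuit with bit wires (values in $\{0,1\}$) and element wires (values in $\mathbb{Z}_N\cup\{\bot\}$; an element wire holding $x$ is written $g^x$). Bit gates act only on bit wires. Element gates: a labeling gate maps $\lceil\log_2N\rceil$ bit wires representing $x\in\mathbb{Z}_N$ to $g^x$ (or $\bot$ if no such $x$); a group operation gate maps element wires $g^x,g^y$ and a bit $b$ to $g^{x+by}$ (or $\bot$ if an input is $\bot$); an equality gate outputs the bit $1$ iff its two element inputs contain the same element different from $\bot$. The cost measure (group operation complexity) counts labeling and group operation gates; all other gates are free. No two equality gates have the same input wires. The $m$-multiple DL ($m$-MDL) problem asks, given $(g,g^{x_1},\dots,g^{x_m})$ on element wires for uniformly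 random $(x_1,\dots,x_m)\in\{0,\dots,N-1\}^m$, to output $(x_1,\dots,x_m)$. *)

theory Defs
  imports "HOL-Probability.Probability"
begin

text \<open>Wires are split into bit wires and element wires, each numbered in order
of creation. An element wire holds Some x (representing g^x, x in {0..N-1})
or None (representing bottom).\<close>

datatype gate =
    BitG "bool list \<Rightarrow> bool" "nat list"
  | Label "nat list"                     \<comment> \<open>labeling gate: bit wires (little endian) to g^x\<close>
  | GOp nat nat nat                      \<comment> \<open>group operation: g^x, g^y, bit b to g^(x+b*y)\<close>
  | EqG nat nat

record circuit =
  gates :: "gate list"
  outs  :: "nat list list"   \<comment> \<open>output: m blocks of bit wires, block i encodes x_i\<close>

definition nbits :: "nat \<Rightarrow> nat" where
  "nbits N = nat \<lceil>log 2 (real N)\<rceil>"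

definition bits_val :: "bool list \<Rightarrow> nat" where
  "bits_val bs = (\<Sum>i<length bs. if bs ! i then 2 ^ i else 0)"

fun step :: "nat \<Rightarrow> bool list \<times> nat option list \<Rightarrow> gate \<Rightarrow> bool list \<times> nat option list" where
  "step N (bs, es) (BitG f is) = (bs @ [f (map ((!) bs) is)], es)"
| "step N (bs, es) (Label is) =
     (bs, es @ [let v = bits_val (map ((!) bs) is) in if v < N then Some v else None])"
| "step N (bs, es) (GOp i j k) =
     (bs, es @ [case (es ! i, es ! j) of
                  (Some a, Some b) \<Rightarrow> Some ((a + (if bs ! k then b else 0)) mod N)
                | _ \<Rightarrow> None])"
| "step N (bs, es) (EqG i j) =
     (bs @ [case (es ! i, es ! j) of (Some a, Some b) \<Rightarrow> a = b | _ \<Rightarrow> False], es)"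

text \<open>Run the circuit on input (g, g^x_1, ..., g^x_m); g = g^1.\<close>
definition run :: "nat \<Rightarrow> circuit \<Rightarrow> nat list \<Rightarrow> bool list \<times> nat option list" where
  "run N c xs = foldl (step N) ([], Some 1 # map Some xs) (gates c)"

definition circ_output :: "nat \<Rightarrow> circuit \<Rightarrow> nat list \<Rightarrow> nat list" where
  "circ_output N c xs = map (\<lambda>ws. bits_val (map ((!) (fst (run N c xs))) ws)) (outs c)"

fun new_bits :: "gate \<Rightarrow> nat" where
  "new_bits (BitG _ _) = 1" | "new_bits (EqG _ _) = 1" | "new_bits _ = 0"

fun new_elems :: "gate \<Rightarrow> nat" where
  "new_elems (Label _) = 1" | "new_elems (GOp _ _ _) = 1" | "new_elems _ = 0"

fun wf_gate :: "nat \<Rightarrow> nat \<Rightarrow> nat \<Rightarrow> gate \<Rightarrow> bool" where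
  "wf_gate L nb ne (BitG f is) = (\<forall>i\<in>set is. i < nb)"
| "wf_gate L nb ne (Label is) = (length is = L \<and> (\<forall>i\<in>set is. i < nb))"
| "wf_gate L nb ne (GOp i j k) = (i < ne \<and> j < ne \<and> k < nb)"
| "wf_gate L nb ne (EqG i j) = (i < ne \<and> j < ne)"

fun wf_gates :: "nat \<Rightarrow> nat \<Rightarrow> nat \<Rightarrow> gate list \<Rightarrow> bool" where
  "wf_gates L nb ne [] = True"
| "wf_gates L nb ne (g # gs) =
     (wf_gate L nb ne g \<and> wf_gates L (nb + new_bits g) (ne + new_elems g) gs)"

fun eq_inputs :: "gate \<Rightarrow> nat set list" where
  "eq_inputs (EqG i j) = [{i, j}]" | "eq_inputs _ = []"

definition wf_circuit :: "nat \<Rightarrow> nat \<Rightarrow> circuit \<Rightarrow> bool" where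
  "wf_circuit N m c \<longleftrightarrow>
     wf_gates (nbits N) 0 (m + 1) (gates c) \<and>
     distinct (concat (map eq_inputs (gates c))) \<and>
     length (outs c) = m \<and>
     (\<forall>ws\<in>set (outs c). length ws = nbits N \<and>
        (\<forall>i\<in>set ws. i < sum_list (map new_bits (gates c))))"

fun costly :: "gate \<Rightarrow> bool" where
  "costly (Label _) = True" | "costly (GOp _ _ _) = True" | "costly _ = False"

definition cost :: "circuit \<Rightarrow> nat" where
  "cost c = length (filter costly (gates c))"

definition mdl_inputs :: "nat \<Rightarrow> nat \<Rightarrow> nat list set" where
  "mdl_inputs N m = {xs. length xs = m \<and> set xs \<subseteq> {..<N}}"

definition success_prob :: "nat \<Rightarrow> nat \<Rightarrow> circuit pmf \<Rightarrow> real" where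
  "success_prob N m A =
     measure_pmf.prob (pair_pmf A (pmf_of_set (mdl_inputs N m)))
       {(c, xs). circ_output N c xs = xs}"

end

theory Submission
  imports Defs
begin

definition sh :: "nat \<Rightarrow> int \<Rightarrow> nat list \<Rightarrow> nat list \<Rightarrow> nat list \<Rightarrow> nat list" where
  "sh N c y z w = map (\<lambda>i. nat ((int (y!i) + c * (int (z!i) - int (w!i))) mod int N)) [0..<length y]"

definition aff :: "nat \<Rightarrow> nat \<Rightarrow> (nat list \<Rightarrow> nat) \<Rightarrow> bool" where
  "aff N m f \<longleftrightarrow> (\<forall>y\<in>mdl_inputs N m. f y < N) \<and>
     (\<forall>y\<in>mdl_inputs N m. \<forall>z\<in>mdl_inputs N m. \<forall>w\<in>mdl_inputs N m. \<forall>c.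
        int (f (sh N c y z w)) = (int (f y) + c * (int (f z) - int (f w))) mod int N)"

definition aclosed :: "nat \<Rightarrow> nat list set \<Rightarrow> bool" where
  "aclosed N V \<longleftrightarrow> (\<forall>y\<in>V. \<forall>z\<in>V. \<forall>w\<in>V. \<forall>c. sh N c y z w \<in> V)"

lemma sh_length[simp]: "length (sh N c y z w) = length y"
  by (simp add: sh_def)

lemma sh_nth: "i < length y \<Longrightarrow> sh N c y z w ! i = nat ((int (y!i) + c * (int (z!i) - int (w!i))) mod int N)"
  by (simp add: sh_def)

lemma sh_in: assumes "N > 0" "y \<in> mdl_inputs N m" shows "sh N c y z w \<in> mdl_inputs N m"
proof -
  have "\<forall>a\<in>set (sh N c y z w). a < N"
  proof
    fix a assume "a \<in> set (sh N c y z w)"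
    then obtain i where "i < length y" "a = sh N c y z w ! i" by (auto simp: in_set_conv_nth)
    then show "a < N" using assms(1) by (simp add: sh_nth nat_less_iff)
  qed
  then show ?thesis using assms by (auto simp: mdl_inputs_def)
qed

lemma aclosed_inputs: "N > 0 \<Longrightarrow> aclosed N (mdl_inputs N m)"
  using sh_in by (auto simp: aclosed_def)

lemma inputs_nth: "y \<in> mdl_inputs N m \<Longrightarrow> i < m \<Longrightarrow> y ! i < N"
  unfolding mdl_inputs_def using nth_mem by fastforce

lemma modlin: "((a::int) mod n + c * (b mod n - d mod n)) mod n = (a + c * (b - d)) mod n"
proof -
  have "(c * (b mod n - d mod n)) mod n = (c * ((b mod n - d mod n) mod n)) mod n"
    by (simp only: mod_mult_right_eq)
  also have "\<dots> = (c * ((b - d) mod n)) mod n" by (simp only: mod_diff_eq)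
  also have "\<dots> = (c * (b - d)) mod n" by (simp only: mod_mult_right_eq)
  finally have e: "(c * (b mod n - d mod n)) mod n = (c * (b - d)) mod n" .
  have "((a::int) mod n + c * (b mod n - d mod n)) mod n = (a + c * (b mod n - d mod n)) mod n"
    by (simp only: mod_add_left_eq)
  also have "\<dots> = (a + (c * (b mod n - d mod n)) mod n) mod n" by (simp only: mod_add_right_eq)
  also have "\<dots> = (a + (c * (b - d)) mod n) mod n" by (simp only: e)
  also have "\<dots> = (a + c * (b - d)) mod n" by (simp only: mod_add_right_eq)
  finally show ?thesis .
qed


lemma aff_proj: assumes "N > 0" "i < m" shows "aff N m (\<lambda>y. y ! i)"
  using assms by (auto simp: aff_def inputs_nth sh_nth mdl_inputs_def)

lemma aff_const: assumes "v < N" shows "aff N m (\<lambda>y. v)"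
  using assms by (auto simp: aff_def)

lemma aff_cong: assumes "aff N m f" "\<forall>y\<in>mdl_inputs N m. f y = g y" "N > 0" shows "aff N m g"
  using assms sh_in by (auto simp: aff_def)

lemma aff_add: assumes "aff N m f" "aff N m g" "N > 0" shows "aff N m (\<lambda>y. (f y + g y) mod N)"
  unfolding aff_def
proof (intro conjI ballI allI)
  fix y assume "y \<in> mdl_inputs N m" then show "(f y + g y) mod N < N" using assms by simp
next
  fix y z w c assume yzw: "y \<in> mdl_inputs N m" "z \<in> mdl_inputs N m" "w \<in> mdl_inputs N m"
  have f: "int (f (sh N c y z w)) = (int (f y) + c * (int (f z) - int (f w))) mod int N"
   and g: "int (g (sh N c y z w)) = (int (g y) + c * (int (g z) - int (g w))) mod int N"
    using assms yzw by (auto simp: aff_def)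
  show "int ((f (sh N c y z w) + g (sh N c y z w)) mod N) =
        (int ((f y + g y) mod N) + c * (int ((f z + g z) mod N) - int ((f w + g w) mod N))) mod int N"
    unfolding zmod_int of_nat_add f g
  proof -
    let ?fy = "int (f y)" and ?fz = "int (f z)" and ?fw = "int (f w)" and ?gy = "int (g y)" and ?gz = "int (g z)" and ?gw = "int (g w)" and ?n = "int N"
    have "((?fy + c * (?fz - ?fw)) mod ?n + (?gy + c * (?gz - ?gw)) mod ?n) mod ?n = ((?fy + c * (?fz - ?fw)) + (?gy + c * (?gz - ?gw))) mod ?n"
      by (rule mod_add_eq)
    also have "(?fy + c * (?fz - ?fw)) + (?gy + c * (?gz - ?gw)) = (?fy + ?gy) + c * ((?fz + ?gz) - (?fw + ?gw))"
      by (simp add: algebra_simps)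
    finally show "((?fy + c * (?fz - ?fw)) mod ?n + (?gy + c * (?gz - ?gw)) mod ?n) mod ?n =
      ((?fy + ?gy) mod ?n + c * ((?fz + ?gz) mod ?n - (?fw + ?gw) mod ?n)) mod ?n" unfolding modlin .
  qed
qed

lemma aclosed_inter: assumes "aclosed N V" "V \<subseteq> mdl_inputs N m" "aff N m f" "aff N m g"
  shows "aclosed N (V \<inter> {y. f y = g y})"
  unfolding aclosed_def
proof (intro ballI allI)
  fix y z w c assume a: "y \<in> V \<inter> {y. f y = g y}" "z \<in> V \<inter> {y. f y = g y}" "w \<in> V \<inter> {y. f y = g y}"
  then have "sh N c y z w \<in> V" using assms(1) by (auto simp: aclosed_def)
  moreover have "int (f (sh N c y z w)) = int (g (sh N c y z w))"
  proof -
    have "y \<in> mdl_inputs N m" "z \<in> mdl_inputs N m" "w \<in> mdl_inputs N m" using a assms(2) by auto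
    have "int (f (sh N c y z w)) = (int (f y) + c * (int (f z) - int (f w))) mod int N"
      using assms(3) \<open>y \<in> mdl_inputs N m\<close> \<open>z \<in> mdl_inputs N m\<close> \<open>w \<in> mdl_inputs N m\<close> unfolding aff_def by blast
    moreover have "int (g (sh N c y z w)) = (int (g y) + c * (int (g z) - int (g w))) mod int N"
      using assms(4) \<open>y \<in> mdl_inputs N m\<close> \<open>z \<in> mdl_inputs N m\<close> \<open>w \<in> mdl_inputs N m\<close> unfolding aff_def by blast
    ultimately show ?thesis using a by simp
  qed
  ultimately show "sh N c y z w \<in> V \<inter> {y. f y = g y}" by simp
qed

lemma finite_inputs: "finite (mdl_inputs N m)"
proof -
  have "mdl_inputs N m = {xs. set xs \<subseteq> {..<N} \<and> length xs = m}" by (auto simp: mdl_inputs_def)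
  then show ?thesis using finite_lists_length_eq[of "{..<N}" m] by simp
qed

lemma card_inputs: "card (mdl_inputs N m) = N ^ m"
proof -
  have "mdl_inputs N m = {xs. set xs \<subseteq> {..<N} \<and> length xs = m}" by (auto simp: mdl_inputs_def)
  then show ?thesis using card_lists_length_eq[of "{..<N}" m] by simp
qed

lemma shrink:
  assumes N: "prime N" and cl: "aclosed N V" and VI: "V \<subseteq> mdl_inputs N m"
    and af: "aff N m f" and ag: "aff N m g"
    and y1: "y1 \<in> V" "f y1 = g y1" and y2: "y2 \<in> V" "f y2 \<noteq> g y2"
  shows "N * card (V \<inter> {y. f y = g y}) \<le> card V"
proof -
  define W where "W = V \<inter> {y. f y = g y}"
  define \<phi> where "\<phi> = (\<lambda>(c::nat, y). sh N (int c) y y2 y1)"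
  have N0: "N > 0" using N prime_gt_0_nat by blast
  have finV: "finite V" using VI finite_inputs finite_subset by blast
  have img: "\<phi> ` ({..<N} \<times> W) \<subseteq> V"
    using cl y1 y2 by (auto simp: \<phi>_def W_def aclosed_def)
  have key: "(int (f (\<phi> (c, y))) - int (g (\<phi> (c, y)))) mod int N = (int c * (int (f y2) - int (g y2))) mod int N"
    if "y \<in> W" for c y
  proof -
    have yI: "y \<in> mdl_inputs N m" "y1 \<in> mdl_inputs N m" "y2 \<in> mdl_inputs N m" using that y1 y2 VI by (auto simp: W_def)
    have a: "int (f (\<phi> (c, y))) = (int (f y) + int c * (int (f y2) - int (f y1))) mod int N"
      using af yI unfolding aff_def \<phi>_def by auto
    have b: "int (g (\<phi> (c, y))) = (int (g y) + int c * (int (g y2) - int (g y1))) mod int N"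
      using ag yI unfolding aff_def \<phi>_def by auto
    have fy: "f y = g y" using that by (simp add: W_def)
    have "(int (f (\<phi> (c, y))) - int (g (\<phi> (c, y)))) mod int N =
      ((int (f y) + int c * (int (f y2) - int (f y1))) - (int (g y) + int c * (int (g y2) - int (g y1)))) mod int N"
      unfolding a b by (rule mod_diff_eq)
    also have "(int (f y) + int c * (int (f y2) - int (f y1))) - (int (g y) + int c * (int (g y2) - int (g y1)))
       = int c * (int (f y2) - int (g y2))" using fy y1(2) by (simp add: algebra_simps)
    finally show ?thesis .
  qed
  have inj: "inj_on \<phi> ({..<N} \<times> W)"
  proof (rule inj_onI)
    fix p q assume p: "p \<in> {..<N} \<times> W" and q: "q \<in> {..<N} \<times> W" and e: "\<phi> p = \<phi> q"
    obtain c y where cy: "p = (c, y)" "c < N" "y \<in> W" using p by auto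
    obtain c' y' where cy': "q = (c', y')" "c' < N" "y' \<in> W" using q by auto
    let ?k = "int (f y2) - int (g y2)"
    have "(int c * ?k) mod int N = (int c' * ?k) mod int N"
      using key[OF cy(3), of c] key[OF cy'(3), of c'] e cy cy' by simp
    then have "int N dvd (int c - int c') * ?k"
      by (metis mod_eq_dvd_iff left_diff_distrib)
    moreover have "\<not> int N dvd ?k"
    proof
      assume "int N dvd ?k"
      moreover have "f y2 < N" "g y2 < N" using af ag y2 VI unfolding aff_def by auto
      moreover have "?k \<noteq> 0" using y2(2) by simp
      ultimately show False using dvd_imp_le_int[of ?k "int N"] by arith
    qed
    moreover have "prime (int N)" using N by simp
    ultimately have "int N dvd (int c - int c')" using prime_dvd_mult_iff by blast
    then have cc: "c = c'" using cy(2) cy'(2) dvd_imp_le_int[of "int c - int c'" "int N"] by arith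
    have yI: "y \<in> mdl_inputs N m" "y' \<in> mdl_inputs N m" using cy(3) cy'(3) VI by (auto simp: W_def)
    have "y = y'"
    proof (rule nth_equalityI)
      show len: "length y = length y'" using yI by (simp add: mdl_inputs_def)
      fix i assume i: "i < length y"
      have "sh N (int c) y y2 y1 ! i = sh N (int c) y' y2 y1 ! i" using e cy cy' cc by (simp add: \<phi>_def)
      then have "nat ((int (y!i) + int c * (int (y2!i) - int (y1!i))) mod int N) =
                 nat ((int (y'!i) + int c * (int (y2!i) - int (y1!i))) mod int N)"
        using i len by (simp add: sh_nth)
      then have "(int (y!i) + int c * (int (y2!i) - int (y1!i))) mod int N =
                 (int (y'!i) + int c * (int (y2!i) - int (y1!i))) mod int N"
        using N0 by (simp add: nat_eq_iff2)
      then have "int (y!i) mod int N = int (y'!i) mod int N"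
        unfolding mod_eq_dvd_iff by simp
      moreover have "y!i < N" "y'!i < N" using yI i len by (auto intro: inputs_nth simp: mdl_inputs_def)
      ultimately show "y!i = y'!i" by simp
    qed
    then show "p = q" using cy cy' cc by simp
  qed
  have "card ({..<N} \<times> W) = N * card W" by (simp add: card_cartesian_product)
  moreover have "card ({..<N} \<times> W) \<le> card V"
    using card_inj_on_le[OF inj img finV] .
  ultimately show ?thesis by (simp add: W_def)
qed


type_synonym sstate = "bool list \<times> (nat list \<Rightarrow> nat) option list \<times> nat list set \<times> bool list"

fun sstep :: "nat \<Rightarrow> nat list \<Rightarrow> sstate \<Rightarrow> gate \<Rightarrow> sstate" where
  "sstep N x (bs, es, V, fl) (BitG f is) = (bs @ [f (map ((!) bs) is)], es, V, fl @ [False])"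
| "sstep N x (bs, es, V, fl) (Label is) =
     (bs, es @ [let v = bits_val (map ((!) bs) is) in if v < N then Some (\<lambda>y. v) else None], V, fl @ [False])"
| "sstep N x (bs, es, V, fl) (GOp i j k) =
     (bs, es @ [case (es ! i, es ! j) of
                  (Some f, Some g) \<Rightarrow> Some (\<lambda>y. (f y + (if bs ! k then g y else 0)) mod N)
                | _ \<Rightarrow> None], V, fl @ [False])"
| "sstep N x (bs, es, V, fl) (EqG i j) =
     (case (es ! i, es ! j) of
        (Some f, Some g) \<Rightarrow>
          (let inf = (((\<exists>y\<in>V. f y = g y) \<and> (\<exists>y\<in>V. f y \<noteq> g y)) \<and> f x = g x) in
            (bs @ [f x = g x], es, if inf then V \<inter> {y. f y = g y} else V, fl @ [inf]))
      | _ \<Rightarrow> (bs @ [False], es, V, fl @ [False]))"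

definition proj :: "nat list \<Rightarrow> sstate \<Rightarrow> bool list \<times> nat option list" where
  "proj x s = (fst s, map (map_option (\<lambda>f. f x)) (fst (snd s)))"

lemma step_proj:
  assumes "wf_gate L (length (fst s)) (length (fst (snd s))) g"
  shows "step N (proj x s) g = proj x (sstep N x s g)
    \<and> length (fst (sstep N x s g)) = length (fst s) + new_bits g
    \<and> length (fst (snd (sstep N x s g))) = length (fst (snd s)) + new_elems g"
proof -
  obtain bs es V fl where s: "s = (bs, es, V, fl)" by (cases s) auto
  show ?thesis using assms unfolding s
    by (cases g) (auto simp: proj_def Let_def split: option.splits)
qed

lemma run_proj:
  assumes "wf_gates L (length (fst s)) (length (fst (snd s))) gs"
  shows "foldl (step N) (proj x s) gs = proj x (foldl (sstep N x) s gs)"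
  using assms
proof (induction gs arbitrary: s)
  case Nil then show ?case by simp
next
  case (Cons g gs)
  have w: "wf_gate L (length (fst s)) (length (fst (snd s))) g"
    and ws: "wf_gates L (length (fst s) + new_bits g) (length (fst (snd s)) + new_elems g) gs"
    using Cons.prems by auto
  note sp = step_proj[OF w, of N x]
  have "wf_gates L (length (fst (sstep N x s g))) (length (fst (snd (sstep N x s g)))) gs"
    using ws sp by simp
  then show ?case using Cons.IH sp by simp
qed

definition fls :: "sstate \<Rightarrow> bool list" where "fls s = snd (snd (snd s))"
definition vs :: "sstate \<Rightarrow> nat list set" where "vs s = fst (snd (snd s))"

fun is_eq :: "gate \<Rightarrow> bool" where "is_eq (EqG _ _) = True" | "is_eq _ = False"

lemma step_fls: "\<exists>b. fls (sstep N x s g) = fls s @ [b] \<and> (b \<longrightarrow> is_eq g)"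
proof -
  obtain bs es V fl where s: "s = (bs, es, V, fl)" by (cases s) auto
  show ?thesis unfolding s
    by (cases g) (auto simp: fls_def Let_def split: option.splits)
qed

lemma run_fls: "\<exists>fl'. fls (foldl (sstep N x) s gs) = fls s @ fl' \<and> list_all2 (\<lambda>b g. b \<longrightarrow> is_eq g) fl' gs"
proof (induction gs arbitrary: s)
  case Nil then show ?case by simp
next
  case (Cons g gs)
  obtain b where b: "fls (sstep N x s g) = fls s @ [b]" "b \<longrightarrow> is_eq g" using step_fls by blast
  obtain fl' where "fls (foldl (sstep N x) (sstep N x s g) gs) = fls (sstep N x s g) @ fl'"
     "list_all2 (\<lambda>b g. b \<longrightarrow> is_eq g) fl' gs" using Cons.IH by blast
  then show ?case using b by (intro exI[of _ "b # fl'"]) auto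
qed

lemma step_agree:
  assumes "x \<in> vs s" "y \<in> vs s" "fls (sstep N x s g) = fls (sstep N y s g)"
  shows "sstep N x s g = sstep N y s g \<and> x \<in> vs (sstep N x s g) \<and> y \<in> vs (sstep N x s g)"
proof -
  obtain bs es V fl where s: "s = (bs, es, V, fl)" by (cases s) auto
  show ?thesis using assms unfolding s
    by (cases g) (auto simp: fls_def vs_def Let_def split: option.splits if_splits)
qed

lemma run_agree:
  assumes "x \<in> vs s" "y \<in> vs s" "fls (foldl (sstep N x) s gs) = fls (foldl (sstep N y) s gs)"
  shows "foldl (sstep N x) s gs = foldl (sstep N y) s gs"
  using assms
proof (induction gs arbitrary: s)
  case Nil then show ?case by simp
next
  case (Cons g gs)
  obtain f1 where f1: "fls (foldl (sstep N x) (sstep N x s g) gs) = fls (sstep N x s g) @ f1"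
    "list_all2 (\<lambda>b g. b \<longrightarrow> is_eq g) f1 gs" using run_fls by blast
  obtain f2 where f2: "fls (foldl (sstep N y) (sstep N y s g) gs) = fls (sstep N y s g) @ f2"
    "list_all2 (\<lambda>b g. b \<longrightarrow> is_eq g) f2 gs" using run_fls by blast
  obtain b1 where b1: "fls (sstep N x s g) = fls s @ [b1]" using step_fls by blast
  obtain b2 where b2: "fls (sstep N y s g) = fls s @ [b2]" using step_fls by blast
  have "length f1 = length f2" using f1(2) f2(2) list_all2_lengthD by metis
  then have "fls (sstep N x s g) = fls (sstep N y s g)"
    using Cons.prems(3) f1(1) f2(1) b1 b2 by auto
  then have e: "sstep N x s g = sstep N y s g" "x \<in> vs (sstep N x s g)" "y \<in> vs (sstep N x s g)"
    using step_agree[OF Cons.prems(1,2)] by blast+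
  show ?case using Cons.IH[OF e(2) e(3)] Cons.prems(3) e(1) by simp
qed


definition Inv :: "nat \<Rightarrow> nat \<Rightarrow> nat list \<Rightarrow> sstate \<Rightarrow> bool" where
  "Inv N m x s \<longleftrightarrow> vs s \<subseteq> mdl_inputs N m \<and> aclosed N (vs s) \<and> x \<in> vs s \<and>
     (\<forall>e\<in>set (fst (snd s)). \<forall>f. e = Some f \<longrightarrow> aff N m f) \<and>
     card (vs s) * N ^ length (filter id (fls s)) \<le> N ^ m"

lemma step_inv:
  assumes N: "prime N" and w: "wf_gate L (length (fst s)) (length (fst (snd s))) g" and I: "Inv N m x s"
  shows "Inv N m x (sstep N x s g)"
proof -
  have N0: "N > 0" using N prime_gt_0_nat by blast
  obtain bs es V fl where s: "s = (bs, es, V, fl)" by (cases s) auto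
  have VI: "V \<subseteq> mdl_inputs N m" and cl: "aclosed N V" and xV: "x \<in> V"
    and af: "\<And>e f. e \<in> set es \<Longrightarrow> e = Some f \<Longrightarrow> aff N m f"
    and cd: "card V * N ^ length (filter id fl) \<le> N ^ m"
    using I unfolding Inv_def s vs_def fls_def by auto
  show ?thesis
  proof (cases g)
    case (BitG f1 l1) then show ?thesis using I by (simp add: s Inv_def vs_def fls_def)
  next
    case (Label l1)
    then show ?thesis using I aff_const[of _ N m] by (auto simp add: s Inv_def vs_def fls_def Let_def)
  next
    case (GOp i j k)
    have ij: "i < length es" "j < length es" using w GOp s by auto
    have new: "aff N m h" if hh: "(case (es ! i, es ! j) of
                  (Some f, Some g) \<Rightarrow> Some (\<lambda>y. (f y + (if bs ! k then g y else 0)) mod N)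
                | _ \<Rightarrow> None) = Some h" for h
    proof -
      obtain f1 g1 where fg: "es ! i = Some f1" "es ! j = Some g1"
        and h: "h = (\<lambda>y. (f1 y + (if bs ! k then g1 y else 0)) mod N)"
        using hh by (auto split: option.splits)
      have a1: "aff N m f1" "aff N m g1" using af fg ij nth_mem by metis+
      show ?thesis
      proof (cases "bs ! k")
        case True then show ?thesis using h aff_add[OF a1 N0] by simp
      next
        case False
        have "\<forall>y\<in>mdl_inputs N m. f1 y = h y" using a1(1) False h by (auto simp: aff_def)
        then show ?thesis using aff_cong[OF a1(1) _ N0] by blast
      qed
    qed
    show ?thesis using I new GOp unfolding s Inv_def vs_def fls_def by auto
  next
    case (EqG i j)
    have ij: "i < length es" "j < length es" using w EqG s by auto
    show ?thesis
    proof (cases "\<exists>f1 g1. es ! i = Some f1 \<and> es ! j = Some g1")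
      case False
      then have "sstep N x s g = (bs @ [False], es, V, fl @ [False])"
        unfolding s EqG by (auto split: option.splits)
      then show ?thesis using I unfolding s Inv_def vs_def fls_def by auto
    next
      case True
      then obtain f1 g1 where fg: "es ! i = Some f1" "es ! j = Some g1" by blast
      have a1: "aff N m f1" "aff N m g1" using af fg ij nth_mem by metis+
      define inf where "inf = (((\<exists>y\<in>V. f1 y = g1 y) \<and> (\<exists>y\<in>V. f1 y \<noteq> g1 y)) \<and> f1 x = g1 x)"
      have st: "sstep N x s g = (bs @ [f1 x = g1 x], es, if inf then V \<inter> {y. f1 y = g1 y} else V, fl @ [inf])"
        unfolding s EqG inf_def using fg by simp
      show ?thesis
      proof (cases inf)
        case False then show ?thesis using I st unfolding s Inv_def vs_def fls_def by auto
      next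
        case True
        then obtain y1 y2 where y: "y1 \<in> V" "f1 y1 = g1 y1" "y2 \<in> V" "f1 y2 \<noteq> g1 y2" "f1 x = g1 x"
          unfolding inf_def by blast
        have sh: "N * card (V \<inter> {y. f1 y = g1 y}) \<le> card V"
          using shrink[OF N cl VI a1 y(1,2) y(3,4)] .
        have "card (V \<inter> {y. f1 y = g1 y}) * N ^ length (filter id (fl @ [inf]))
              = (N * card (V \<inter> {y. f1 y = g1 y})) * N ^ length (filter id fl)" using True by simp
        also have "\<dots> \<le> card V * N ^ length (filter id fl)" using sh by simp
        also have "\<dots> \<le> N ^ m" using cd .
        finally have c2: "card (V \<inter> {y. f1 y = g1 y}) * N ^ length (filter id (fl @ [inf])) \<le> N ^ m" .
        have "aclosed N (V \<inter> {y. f1 y = g1 y})" using aclosed_inter[OF cl VI a1] .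
        then show ?thesis using st True c2 VI xV y(5) af unfolding s Inv_def vs_def fls_def by auto
      qed
    qed
  qed
qed

lemma run_inv:
  assumes N: "prime N" and w: "wf_gates L (length (fst s)) (length (fst (snd s))) gs" and I: "Inv N m x s"
  shows "Inv N m x (foldl (sstep N x) s gs)"
  using w I
proof (induction gs arbitrary: s)
  case Nil then show ?case by simp
next
  case (Cons g gs)
  have w1: "wf_gate L (length (fst s)) (length (fst (snd s))) g"
    and ws: "wf_gates L (length (fst s) + new_bits g) (length (fst (snd s)) + new_elems g) gs"
    using Cons.prems by auto
  note sp = step_proj[OF w1, of N x]
  have "wf_gates L (length (fst (sstep N x s g))) (length (fst (snd (sstep N x s g)))) gs"
    using ws sp by simp
  then show ?case using Cons.IH step_inv[OF N w1 Cons.prems(2)] by simp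
qed


definition sinit :: "nat \<Rightarrow> nat \<Rightarrow> sstate" where
  "sinit N m = ([], Some (\<lambda>y. 1) # map (\<lambda>i. Some (\<lambda>y. y ! i)) [0..<m], mdl_inputs N m, [])"

definition srun :: "nat \<Rightarrow> nat \<Rightarrow> circuit \<Rightarrow> nat list \<Rightarrow> sstate" where
  "srun N m c x = foldl (sstep N x) (sinit N m) (gates c)"

lemma proj_init: "length x = m \<Longrightarrow> proj x (sinit N m) = ([], Some 1 # map Some x)"
  by (auto intro!: nth_equalityI simp: proj_def sinit_def)

lemma run_srun: assumes "wf_circuit N m c" "length x = m"
  shows "run N c x = proj x (srun N m c x)"
proof -
  have "wf_gates (nbits N) (length (fst (sinit N m))) (length (fst (snd (sinit N m)))) (gates c)"
    using assms(1) by (simp add: wf_circuit_def sinit_def)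
  from run_proj[OF this, of N x] show ?thesis
    using proj_init[OF assms(2), of N] by (simp add: run_def srun_def)
qed

lemma inv_init: assumes "prime N" "x \<in> mdl_inputs N m" shows "Inv N m x (sinit N m)"
proof -
  have N1: "1 < N" using assms(1) prime_gt_1_nat by blast
  then have N0: "N > 0" "1 < N" by auto
  have "aff N m (\<lambda>y. 1)" using aff_const N0 by blast
  moreover have "\<forall>i<m. aff N m (\<lambda>y. y ! i)" using aff_proj N0 by blast
  ultimately show ?thesis using assms aclosed_inputs[OF N0(1)]
    by (auto simp: Inv_def sinit_def vs_def fls_def card_inputs)
qed

definition Flags :: "nat \<Rightarrow> circuit \<Rightarrow> bool list set" where
  "Flags m c = {fl. list_all2 (\<lambda>b g. b \<longrightarrow> is_eq g) fl (gates c) \<and> length (filter id fl) \<le> m}"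

lemma srun_flags: assumes "prime N" "wf_circuit N m c" "x \<in> mdl_inputs N m"
  shows "fls (srun N m c x) \<in> Flags m c"
proof -
  have w: "wf_gates (nbits N) (length (fst (sinit N m))) (length (fst (snd (sinit N m)))) (gates c)"
    using assms(2) by (simp add: wf_circuit_def sinit_def)
  have I: "Inv N m x (srun N m c x)" unfolding srun_def using run_inv[OF assms(1) w inv_init[OF assms(1,3)]] .
  let ?s = "srun N m c x"
  have VI: "vs ?s \<subseteq> mdl_inputs N m" "x \<in> vs ?s"
    and cd: "card (vs ?s) * N ^ length (filter id (fls ?s)) \<le> N ^ m" using I by (auto simp: Inv_def)
  have "finite (vs ?s)" using VI finite_inputs finite_subset by blast
  then have "card (vs ?s) \<ge> 1" using VI(2) by (metis One_nat_def Suc_leI card_gt_0_iff empty_iff)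
  then have "1 * N ^ length (filter id (fls ?s)) \<le> card (vs ?s) * N ^ length (filter id (fls ?s))"
    by (rule mult_le_mono1)
  then have "N ^ length (filter id (fls ?s)) \<le> N ^ m" using cd by (simp only: mult_1 order_trans)
  then have le: "length (filter id (fls ?s)) \<le> m"
    using power_le_imp_le_exp[OF prime_gt_1_nat[OF assms(1)]] by blast
  obtain fl' where "fls ?s = fls (sinit N m) @ fl'" "list_all2 (\<lambda>b g. b \<longrightarrow> is_eq g) fl' (gates c)"
    unfolding srun_def using run_fls by blast
  then show ?thesis using le by (simp add: Flags_def sinit_def fls_def)
qed

lemma success_inj: assumes "prime N" "wf_circuit N m c"
  shows "inj_on (\<lambda>x. fls (srun N m c x)) {x \<in> mdl_inputs N m. circ_output N c x = x}"
proof (rule inj_onI)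
  fix x y assume x: "x \<in> {x \<in> mdl_inputs N m. circ_output N c x = x}" and y: "y \<in> {x \<in> mdl_inputs N m. circ_output N c x = x}"
    and e: "fls (srun N m c x) = fls (srun N m c y)"
  have "srun N m c x = srun N m c y"
    unfolding srun_def by (rule run_agree) (use x y e in \<open>auto simp: srun_def vs_def sinit_def\<close>)
  moreover have "length x = m" "length y = m" using x y by (auto simp: mdl_inputs_def)
  ultimately have "fst (run N c x) = fst (run N c y)"
    using run_srun[OF assms(2)] by (simp add: proj_def)
  then have "circ_output N c x = circ_output N c y" by (simp add: circ_output_def)
  then show "x = y" using x y by simp
qed

lemma card_Flags: "card (Flags m c) \<le> (\<Sum>k\<le>m. card {t. t < length (gates c) \<and> is_eq (gates c ! t)} choose k)"
proof -
  let ?n = "length (gates c)"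
  define Qs where "Qs = {t. t < ?n \<and> is_eq (gates c ! t)}"
  define h where "h = (\<lambda>fl::bool list. {t. t < length fl \<and> fl ! t})"
  have len: "\<And>fl. fl \<in> Flags m c \<Longrightarrow> length fl = ?n" by (auto simp: Flags_def list_all2_lengthD)
  have inj: "inj_on h (Flags m c)"
  proof (rule inj_onI)
    fix a b assume a: "a \<in> Flags m c" and b: "b \<in> Flags m c" and e: "h a = h b"
    show "a = b"
    proof (rule nth_equalityI)
      show "length a = length b" using len a b by simp
      fix i assume "i < length a"
      then show "a ! i = b ! i" using e len[OF a] len[OF b] unfolding h_def by (auto simp: set_eq_iff)
    qed
  qed
  have fQ: "finite Qs" by (simp add: Qs_def)
  have img: "h ` Flags m c \<subseteq> (\<Union>k\<in>{..m}. {B. B \<subseteq> Qs \<and> card B = k})"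
  proof
    fix A assume "A \<in> h ` Flags m c"
    then obtain fl where fl: "fl \<in> Flags m c" "A = h fl" by blast
    have "A \<subseteq> Qs" using fl len[OF fl(1)] list_all2_nthD[of _ fl "gates c"]
      unfolding Qs_def h_def Flags_def by auto
    moreover have "card A = length (filter id fl)" unfolding fl(2) h_def length_filter_conv_card by simp
    ultimately show "A \<in> (\<Union>k\<in>{..m}. {B. B \<subseteq> Qs \<and> card B = k})" using fl(1) by (auto simp: Flags_def)
  qed
  have fin: "finite (\<Union>k\<in>{..m}. {B. B \<subseteq> Qs \<and> card B = k})" using fQ by auto
  have "card (Flags m c) = card (h ` Flags m c)" using card_image[OF inj] by simp
  also have "\<dots> \<le> card (\<Union>k\<in>{..m}. {B. B \<subseteq> Qs \<and> card B = k})" using card_mono[OF fin img] .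
  also have "\<dots> \<le> (\<Sum>k\<le>m. card {B. B \<subseteq> Qs \<and> card B = k})" using card_UN_le by blast
  also have "\<dots> = (\<Sum>k\<le>m. card Qs choose k)" using n_subsets[OF fQ] by simp
  finally show ?thesis unfolding Qs_def .
qed

lemma finite_Flags: "finite (Flags m c)"
proof -
  have "Flags m c \<subseteq> {fl. set fl \<subseteq> UNIV \<and> length fl = length (gates c)}"
    by (auto simp: Flags_def list_all2_lengthD)
  then show ?thesis using finite_lists_length_eq[of "UNIV :: bool set"] finite_subset by auto
qed

lemma success_count: assumes "prime N" "wf_circuit N m c"
  shows "card {x \<in> mdl_inputs N m. circ_output N c x = x}
     \<le> (\<Sum>k\<le>m. card {t. t < length (gates c) \<and> is_eq (gates c ! t)} choose k)"
proof -
  have "card {x \<in> mdl_inputs N m. circ_output N c x = x} \<le> card (Flags m c)"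
    by (rule card_inj_on_le[OF success_inj[OF assms] _ finite_Flags]) (use srun_flags[OF assms] in auto)
  then show ?thesis using card_Flags order_trans by blast
qed


definition Pairs :: "nat \<Rightarrow> nat set set" where
  "Pairs n = (\<lambda>(j,i). {i,j}) ` (SIGMA j:{..<n}. {..j})"

lemma Pairs_mono: "n \<le> n' \<Longrightarrow> Pairs n \<subseteq> Pairs n'"
  unfolding Pairs_def by auto

lemma Pairs_mem: assumes "i < n" "j < n" shows "{i, j} \<in> Pairs n"
proof (cases "i \<le> j")
  case True then show ?thesis using assms unfolding Pairs_def by (auto intro!: image_eqI[of _ _ "(j,i)"])
next
  case False then show ?thesis using assms unfolding Pairs_def by (auto intro!: image_eqI[of _ _ "(i,j)"])
qed

lemma sum_suc: "2 * (\<Sum>j<n. Suc j) = n * (n + 1)"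
  by (induction n) auto

lemma card_Pairs: "2 * card (Pairs n) \<le> n * (n + 1)"
proof -
  have "card (Pairs n) \<le> card (SIGMA j:{..<n}. {..j})" unfolding Pairs_def by (rule card_image_le) auto
  also have "\<dots> = (\<Sum>j<n. Suc j)" by (simp add: card_SigmaI)
  finally show ?thesis using sum_suc[of n] by linarith
qed

lemma eq_len: "length (filter is_eq gs) = length (concat (map eq_inputs gs))"
proof (induction gs)
  case Nil then show ?case by simp
next
  case (Cons g gs) then show ?case by (cases g) auto
qed

lemma elems_costly: "sum_list (map new_elems gs) = length (filter costly gs)"
proof (induction gs)
  case Nil then show ?case by simp
next
  case (Cons g gs) then show ?case by (cases g) auto
qed

lemma eq_in_pairs: "wf_gates L nb ne gs \<Longrightarrow> set (concat (map eq_inputs gs)) \<subseteq> Pairs (ne + sum_list (map new_elems gs))"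
proof (induction gs arbitrary: nb ne)
  case Nil then show ?case by simp
next
  case (Cons g gs)
  have ih: "set (concat (map eq_inputs gs)) \<subseteq> Pairs (ne + new_elems g + sum_list (map new_elems gs))"
    using Cons by auto
  have "set (eq_inputs g) \<subseteq> Pairs ne" using Cons.prems by (cases g) (auto intro: Pairs_mem)
  then have "set (eq_inputs g) \<subseteq> Pairs (ne + sum_list (map new_elems (g # gs)))"
    using Pairs_mono[of ne "ne + sum_list (map new_elems (g # gs))"] by auto
  then show ?case using ih by (auto simp: add.assoc)
qed

lemma Q_bound: assumes "wf_circuit N m c"
  shows "2 * card {t. t < length (gates c) \<and> is_eq (gates c ! t)} \<le> (m + 1 + cost c) * (m + 1 + cost c + 1)"
proof -
  let ?L = "concat (map eq_inputs (gates c))"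
  have "card {t. t < length (gates c) \<and> is_eq (gates c ! t)} = length ?L"
    using eq_len length_filter_conv_card by metis
  also have "\<dots> = card (set ?L)" using assms distinct_card[of ?L] unfolding wf_circuit_def by argo
  also have "\<dots> \<le> card (Pairs (m + 1 + cost c))"
  proof (rule card_mono)
    show "finite (Pairs (m + 1 + cost c))" by (simp add: Pairs_def)
    show "set ?L \<subseteq> Pairs (m + 1 + cost c)"
      using eq_in_pairs[of "nbits N" 0 "m+1" "gates c"] assms elems_costly[of "gates c"]
      by (simp add: wf_circuit_def cost_def)
  qed
  finally show ?thesis using card_Pairs[of "m + 1 + cost c"] by linarith
qed


lemma choose_le_real: "real (n choose k) \<le> real n ^ k / fact k"
proof (cases "k \<le> n")
  case True
  have e: "fact k * fact (n - k) * (n choose k) = fact n" using binomial_fact_lemma[OF True] .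
  have "fact n div fact (n - k) = fact k * (n choose k)"
  proof -
    have "fact n = (fact k * (n choose k)) * fact (n - k)" using e by (simp add: ac_simps)
    then show ?thesis by simp
  qed
  then have "fact k * (n choose k) \<le> n ^ k" using fact_div_fact_le_pow[OF True] by simp
  then have "real (fact k * (n choose k)) \<le> real (n ^ k)" by (simp only: of_nat_le_iff)
  then have "fact k * real (n choose k) \<le> real n ^ k" by simp
  then show ?thesis by (simp add: field_simps)
next
  case False then have z: "n choose k = 0" using binomial_eq_0[of n k] by simp
  show ?thesis unfolding z by simp
qed

lemma exp_partial: "(\<Sum>k\<le>m. real m ^ k / fact k) \<le> exp (real m)"
proof -
  have s: "(\<lambda>n. real m ^ n /\<^sub>R fact n) sums exp (real m)" by (rule exp_converges)
  have "(\<Sum>k\<le>m. real m ^ k /\<^sub>R fact k) \<le> suminf (\<lambda>n. real m ^ n /\<^sub>R fact n)"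
    by (rule sum_le_suminf) (use s sums_summable in auto)
  then show ?thesis using sums_unique[OF s] by (simp add: divide_inverse mult.commute)
qed

lemma sum_choose_bound:
  fixes P :: real
  assumes m: "m > 0" and P: "real m \<le> P" and Q: "real Q \<le> P"
  shows "(\<Sum>k\<le>m. real (Q choose k)) \<le> (exp 1 * P / real m) ^ m"
proof -
  have P0: "P > 0" using m P by linarith
  have r1: "P / real m \<ge> 1" using m P by simp
  have "(\<Sum>k\<le>m. real (Q choose k)) \<le> (\<Sum>k\<le>m. real Q ^ k / fact k)"
    by (rule sum_mono) (rule choose_le_real)
  also have "\<dots> \<le> (\<Sum>k\<le>m. (P / real m) ^ m * (real m ^ k / fact k))"
  proof (rule sum_mono)
    fix k assume k: "k \<in> {..m}"
    have "real Q ^ k \<le> P ^ k" using Q by (simp add: power_mono)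
    also have "P ^ k = (P / real m) ^ k * real m ^ k" using m by (simp add: power_divide)
    also have "\<dots> \<le> (P / real m) ^ m * real m ^ k"
      using k r1 by (intro mult_right_mono power_increasing) auto
    finally show "real Q ^ k / fact k \<le> (P / real m) ^ m * (real m ^ k / fact k)"
      by (simp add: divide_right_mono)
  qed
  also have "\<dots> = (P / real m) ^ m * (\<Sum>k\<le>m. real m ^ k / fact k)" by (simp add: sum_distrib_left)
  also have "\<dots> \<le> (P / real m) ^ m * exp (real m)"
    using exp_partial P0 by (intro mult_left_mono) auto
  also have "exp (real m) = exp 1 ^ m" using exp_of_nat_mult[of m 1] by simp
  also have "(P / real m) ^ m * exp 1 ^ m = (exp 1 * P / real m) ^ m"
    by (simp add: power_mult_distrib[symmetric] algebra_simps)
  finally show ?thesis .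
qed

lemma circuit_bound:
  assumes N: "prime N" and m: "m > 0" and wf: "wf_circuit N m c" and T: "cost c \<le> T"
  shows "measure_pmf.prob (pmf_of_set (mdl_inputs N m)) {xs. circ_output N c xs = xs}
           \<le> (exp 1 * (real T + 2 * real m + 1)^2 / (2 * real m * real N)) ^ m"
proof -
  let ?I = "mdl_inputs N m"
  let ?Q = "card {t. t < length (gates c) \<and> is_eq (gates c ! t)}"
  define P :: real where "P = (real T + 2 * real m + 1)^2 / 2"
  have N1: "N > 1" using N prime_gt_1_nat by blast
  have cI: "card ?I = N ^ m" by (rule card_inputs)
  have neI: "?I \<noteq> {}" using cI N1 by (metis card.empty less_numeral_extra(3) nat_zero_less_power_iff not_one_less_zero zero_less_iff_neq_zero)
  have "2 * ?Q \<le> (m + 1 + cost c) * (m + 1 + cost c + 1)" using Q_bound[OF wf] .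
  also have "\<dots> \<le> (T + 2 * m + 1) * (T + 2 * m + 1)" using T m by (intro mult_mono) auto
  finally have "real (2 * ?Q) \<le> real ((T + 2 * m + 1) * (T + 2 * m + 1))" by (simp only: of_nat_le_iff)
  then have h2: "2 * real ?Q \<le> (real T + 2*real m+1)*(real T + 2*real m + 1)" by (simp add: algebra_simps)
  then have Qb: "real ?Q \<le> P" unfolding P_def power2_eq_square by linarith
  have a: "(2*real m + 1)*(2*real m+1) \<le> (real T + 2*real m + 1)*(real T + 2*real m+1)"
    by (intro mult_mono) auto
  have "(2*real m + 1)*(2*real m+1) = 4 * (real m * real m) + 4 * real m + 1" by (simp add: algebra_simps)
  moreover have "0 \<le> real m * real m" by simp
  ultimately have b: "2*real m \<le> (2*real m + 1)*(2*real m+1)" by linarith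
  have Pm: "real m \<le> P" unfolding P_def power2_eq_square using a b by linarith
  have cnt: "card {x \<in> ?I. circ_output N c x = x} \<le> (\<Sum>k\<le>m. ?Q choose k)"
    using success_count[OF N wf] .
  have eq: "measure_pmf.prob (pmf_of_set ?I) {xs. circ_output N c xs = xs}
        = real (card {x \<in> ?I. circ_output N c x = x}) / real (card ?I)"
  proof -
    have "?I \<inter> {xs. circ_output N c xs = xs} = {x \<in> ?I. circ_output N c x = x}" by auto
    then show ?thesis using measure_pmf_of_set[OF neI finite_inputs] by simp
  qed
  have c1: "real (card {x \<in> ?I. circ_output N c x = x}) \<le> (\<Sum>k\<le>m. real (?Q choose k))"
    using cnt by (simp only: of_nat_sum[symmetric] of_nat_le_iff)
  have c2: "real (card {x \<in> ?I. circ_output N c x = x}) \<le> (exp 1 * P / real m) ^ m"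
    using order_trans[OF c1 sum_choose_bound[OF m Pm Qb]] .
  have c3: "real (card {x \<in> ?I. circ_output N c x = x}) / real (card ?I) \<le> (exp 1 * P / real m) ^ m / real (card ?I)"
    using c2 by (rule divide_right_mono) simp
  have e1: "exp 1 * P / real m / real N = exp 1 * (real T + 2 * real m + 1)^2 / (2 * real m * real N)"
    unfolding P_def by simp
  have e2: "(exp 1 * P / real m) ^ m / real (card ?I) = (exp 1 * (real T + 2 * real m + 1)^2 / (2 * real m * real N)) ^ m"
    unfolding cI of_nat_power e1[symmetric] power_divide ..
  show ?thesis using eq c3 e2 by simp
qed

lemma mixture_bound:
  fixes A :: "'a pmf" and U :: "'b pmf"
  assumes "\<And>a. a \<in> set_pmf A \<Longrightarrow> measure_pmf.prob U {b. (a, b) \<in> S} \<le> B" and "B \<ge> 0"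
  shows "measure_pmf.prob (pair_pmf A U) S \<le> B"
proof -
  have "emeasure (measure_pmf (pair_pmf A U)) S = (\<integral>\<^sup>+x. indicator S x \<partial>pair_pmf A U)"
    by (simp add: nn_integral_indicator)
  also have "\<dots> = (\<integral>\<^sup>+a. \<integral>\<^sup>+b. indicator S (a, b) \<partial>U \<partial>A)" by (rule nn_integral_pair_pmf')
  also have "\<dots> \<le> (\<integral>\<^sup>+a. ennreal B \<partial>A)"
  proof (rule nn_integral_mono_AE)
    show "AE a in measure_pmf A. (\<integral>\<^sup>+b. indicator S (a, b) \<partial>U) \<le> ennreal B"
      unfolding AE_measure_pmf_iff
    proof
      fix a assume a: "a \<in> set_pmf A"
      have "(\<integral>\<^sup>+b. indicator S (a, b) \<partial>U) = (\<integral>\<^sup>+b. indicator {b. (a, b) \<in> S} b \<partial>U)"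
        by (intro nn_integral_cong) (auto split: split_indicator)
      also have "\<dots> = emeasure (measure_pmf U) {b. (a, b) \<in> S}" by (simp add: nn_integral_indicator)
      also have "\<dots> = ennreal (measure_pmf.prob U {b. (a, b) \<in> S})" by (rule measure_pmf.emeasure_eq_measure)
      also have "\<dots> \<le> ennreal B" using assms(1)[OF a] by (simp add: ennreal_leI)
      finally show "(\<integral>\<^sup>+b. indicator S (a, b) \<partial>U) \<le> ennreal B" .
    qed
  qed
  also have "\<dots> = ennreal B" by (simp add: measure_pmf.emeasure_space_1)
  finally have "ennreal (measure_pmf.prob (pair_pmf A U) S) \<le> ennreal B"
    by (simp add: measure_pmf.emeasure_eq_measure)
  then show ?thesis using assms(2) by (simp add: ennreal_le_iff)
qed

theorem mainTheorem4:
  shows "\<exists>C::real. \<forall>(N::nat) (m::nat) (T::nat) (A::circuit pmf).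
           prime N \<and> m > 0 \<and> (\<forall>c\<in>set_pmf A. wf_circuit N m c \<and> cost c \<le> T) \<longrightarrow>
           success_prob N m A
             \<le> C * (exp 1 * (real T + 2 * real m + 1)^2 / (2 * real m * real N)) ^ m"
proof (intro exI[of _ 1] allI impI)
  fix N m T :: nat and A :: "circuit pmf"
  assume h: "prime N \<and> m > 0 \<and> (\<forall>c\<in>set_pmf A. wf_circuit N m c \<and> cost c \<le> T)"
  have "success_prob N m A \<le> (exp 1 * (real T + 2 * real m + 1)^2 / (2 * real m * real N)) ^ m"
    unfolding success_prob_def
  proof (rule mixture_bound)
    fix c assume "c \<in> set_pmf A"
    then have "wf_circuit N m c" "cost c \<le> T" using h by auto
    then show "measure_pmf.prob (pmf_of_set (mdl_inputs N m)) {b. (c, b) \<in> {(c, xs). circ_output N c xs = xs}}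
       \<le> (exp 1 * (real T + 2 * real m + 1)^2 / (2 * real m * real N)) ^ m"
      using circuit_bound[of N m c T] h by simp
  next
    show "0 \<le> (exp 1 * (real T + 2 * real m + 1)^2 / (2 * real m * real N)) ^ m" by simp
  qed
  then show "success_prob N m A \<le> 1 * (exp 1 * (real T + 2 * real m + 1)^2 / (2 * real m * real N)) ^ m" by simp
qed

end
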